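(* Let $A$ be a set and $T=A^*$ the free monoid on $A$. Let $Y$ be a semilattice and let $\cdot$ be a left partial action of $T$ on $Y$ satisfying axioms (A), (B), (C), which is a partially defined action and such that the restriction semigroup $M(T,Y)$ is an ultra $F$-restriction monoid. Let $X=(Y\times T)/\!\approx$ be the poset and $*$ the left action of $T$ on $X$ given by $t*[y,s]=[y,ts]$ (constructed as in the context). Then: (1) $X$ is a meet semilattice; (2) $*$ is an action of $T$ on $X$ by order-embeddings such that for every $t\in T$ the range $\{t*x\colon x\in X\}$ is an order ideal of $X$, so that the $W$-product $W(T,X)$ can be formed; (3) $M(T,Y)$ embeds into $W(T,X)$ as a $(2,1,1)$-subalgebra (i.e. there is an injective homomorphism of $(2,1,1)$-algebras $M(T,Y)\to W(T,X)$).
   Context: A restriction semigroup is an algebra $(S,\cdot,{}^*,{}^+)$ where $(S,\cdot)$ is a semigroup and the identities $xx^*=x$, $x^*y^*=y^*x^*$, $(xy^* )^*=x^*y^*$, $x^*y=y(xy)^*$, $x^+x=x$, $x^+y^+=y^+x^+$, $(x^+y)^+=x^+y^+$, $xy^+=(xy)^+x$, $(x^+)^*=x^+$, $(x^* )^+=x^*$ hold; homomorphisms preserve the product and both unary operations. If it has an identity it is a restriction monoid. $P(S)=\{x^*\colon x\in S\}=\{x^+\colon x\in S\}$ is the semilattice of projections. $\sigma$ is the least congruence identifying all projections ($a\,\sigma\, b$ iff $ea=eb$ for some $e\in P(S)$). $S$ is proper if ($a^*=b^*$ and $a\,\sigma\, b$) implies $a=b$ and ($a^+=b^+$ and $a\,\sigma\,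 b$) implies $a=b$. The natural partial order is $a\le b$ iff $a=eb$ for some $e\in P(S)$. $S$ is $F$-restriction if every $\sigma$-class has a maximum element. A left partial action of a monoid $T$ on a set $Y$ is a partial map $(t,y)\mapsto t\cdot y$ with $1\cdot y$ defined and equal to $y$, and such that if $t\cdot y$ and $s\cdot(t\cdot y)$ are defined then $(st)\cdot y$ is defined and equals $s\cdot(t\cdot y)$. Write $\varphi_t$ for the partial map $y\mapsto t\cdot y$. For $Y$ a semilattice, the axioms are: (A) $\mathrm{dom}(\varphi_t)$ and $\mathrm{ran}(\varphi_t)$ are order ideals of $Y$; (B) $\varphi_t$ is an order-isomorphism from $\mathrm{dom}(\varphi_t)$ onto $\mathrm{ran}(\varphi_t)$; (C) $\mathrm{dom}(\varphi_t)\neq\varnothing$. The reverse right partial action $\circ$ is: $y\circ t$ is defined iff $y\in\mathrm{ran}(\varphi_t)$, and then $y\circ t=\varphi_t^{-1}(y)$. Then $M(T,Y)=\{(y,t)\in Y\times T\colon y\circ t \text{ defined}\}$ with $(x,s)(y,t)=(s\cdot((x\circ s)\wedge y),st)$, $(y,t)^*=(y\circ t,1)$, $(y,t)^+=(y,1)$ is a proper restriction semigroup. For a proper restriction semigroup $S$, its underlying left partial action is the partial action of $S/\sigma$ on $E=P(S)$: $t\cdot e$ is defined iff there is $a\in t$ with $a^*\ge e$, and then $t\cdot e=(ae)^+$. A left partial action is a partially defined action if for all $s,t,x$: $(st)\cdot x$ is defined iff $t\cdot x$ and $s\cdot(t\cdot x)$ are defined. A restriction semigroup is ultra proper if it is proper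 and its underlying left partial action is a partially defined action; an ultra $F$-restriction monoid is an ultra proper $F$-restriction monoid. Construction of $X$: for $(x,s),(y,t)\in Y\times T$ put $(x,s)\to(y,t)$ if there is $p\in T$ with $s=tp$, $p\cdot x$ defined and $p\cdot x=y$. Let $\sim$ be the equivalence relation generated by $\to$, with classes $[x,s]_\sim$. On $(Y\times T)/\!\sim$ put $A\ge B$ if there are $(x,s)\in A$ and $(y,s)\in B$ with $x\ge y$; this is a preorder. Let $(x,s)\approx(y,t)$ iff $[x,s]_\sim\le[y,t]_\sim$ and $[y,t]_\sim\le[x,s]_\sim$; $X=(Y\times T)/\!\approx$ with the induced partial order and classes $[x,s]$. The action $t*[y,s]=[y,ts]$ is well defined. $W$-product: if a monoid $T$ acts on the left on a semilattice $X$ by order-embeddings with each range $t*X$ an order ideal, then $W(T,X)=\{(t*y,t)\colon y\in X,t\in T\}$ with $(t*y,t)(s*x,s)=(t*y\wedge (ts)*x,ts)$, $(t*y,t)^*=(y,1)$, $(t*y,t)^+=(t*y,1)$. *)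

theory Defs
  imports Main
begin

text \<open>The free monoid on A is 'a list with append and identity []; Y is a meet
 semilattice (type class semilattice_inf).  A partial map is 'y => 'y option.\<close>

definition order_ideal :: "'y::order set \<Rightarrow> bool" where
  "order_ideal I \<longleftrightarrow> (\<forall>x\<in>I. \<forall>y. y \<le> x \<longrightarrow> y \<in> I)"

definition pdom :: "('a list \<Rightarrow> 'y \<Rightarrow> 'y option) \<Rightarrow> 'a list \<Rightarrow> 'y set" where
  "pdom act t = {y. act t y \<noteq> None}"

definition pran :: "('a list \<Rightarrow> 'y \<Rightarrow> 'y option) \<Rightarrow> 'a list \<Rightarrow> 'y set" where
  "pran act t = {z. \<exists>y. act t y = Some z}"

definition left_partial_action :: "('a list \<Rightarrow> 'y \<Rightarrow> 'y option) \<Rightarrow> bool" where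
  "left_partial_action act \<longleftrightarrow>
     (\<forall>y. act [] y = Some y) \<and>
     (\<forall>s t y z w. act t y = Some z \<longrightarrow> act s z = Some w \<longrightarrow> act (s @ t) y = Some w)"

definition axiom_A :: "('a list \<Rightarrow> 'y::order \<Rightarrow> 'y option) \<Rightarrow> bool" where
  "axiom_A act \<longleftrightarrow> (\<forall>t. order_ideal (pdom act t) \<and> order_ideal (pran act t))"

definition axiom_B :: "('a list \<Rightarrow> 'y::order \<Rightarrow> 'y option) \<Rightarrow> bool" where
  "axiom_B act \<longleftrightarrow> (\<forall>t.
     bij_betw (\<lambda>y. the (act t y)) (pdom act t) (pran act t) \<and>
     (\<forall>x\<in>pdom act t. \<forall>y\<in>pdom act t. x \<le> y \<longleftrightarrow> the (act t x) \<le> the (act t y)))"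

definition axiom_C :: "('a list \<Rightarrow> 'y \<Rightarrow> 'y option) \<Rightarrow> bool" where
  "axiom_C act \<longleftrightarrow> (\<forall>t. pdom act t \<noteq> {})"

definition partially_defined_action :: "('a list \<Rightarrow> 'y \<Rightarrow> 'y option) \<Rightarrow> bool" where
  "partially_defined_action act \<longleftrightarrow>
     (\<forall>s t x. act (s @ t) x \<noteq> None \<longleftrightarrow> (act t x \<noteq> None \<and> act s (the (act t x)) \<noteq> None))"

definition ract :: "('a list \<Rightarrow> 'y \<Rightarrow> 'y option) \<Rightarrow> 'y \<Rightarrow> 'a list \<Rightarrow> 'y option" where
  "ract act y t = (if y \<in> pran act t then Some (THE x. act t x = Some y) else None)"

definition M_car :: "('a list \<Rightarrow> 'y \<Rightarrow> 'y option) \<Rightarrow> ('y \<times> 'a list) set" where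
  "M_car act = {(y, t). ract act y t \<noteq> None}"

definition M_mult :: "('a list \<Rightarrow> 'y::semilattice_inf \<Rightarrow> 'y option) \<Rightarrow>
    'y \<times> 'a list \<Rightarrow> 'y \<times> 'a list \<Rightarrow> 'y \<times> 'a list" where
  "M_mult act p q = (case p of (x, s) \<Rightarrow> case q of (y, t) \<Rightarrow>
      (the (act s (inf (the (ract act x s)) y)), s @ t))"

definition M_star :: "('a list \<Rightarrow> 'y \<Rightarrow> 'y option) \<Rightarrow> 'y \<times> 'a list \<Rightarrow> 'y \<times> 'a list" where
  "M_star act p = (case p of (y, t) \<Rightarrow> (the (ract act y t), []))"

definition M_plus :: "'y \<times> 'a list \<Rightarrow> 'y \<times> 'a list" where
  "M_plus p = (case p of (y, t) \<Rightarrow> (y, []))"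

definition restriction_semigroup ::
  "'b set \<Rightarrow> ('b \<Rightarrow> 'b \<Rightarrow> 'b) \<Rightarrow> ('b \<Rightarrow> 'b) \<Rightarrow> ('b \<Rightarrow> 'b) \<Rightarrow> bool" where
  "restriction_semigroup S m st pl \<longleftrightarrow>
     (\<forall>x\<in>S. \<forall>y\<in>S. m x y \<in> S) \<and> (\<forall>x\<in>S. st x \<in> S \<and> pl x \<in> S) \<and>
     (\<forall>x\<in>S. \<forall>y\<in>S. \<forall>z\<in>S. m (m x y) z = m x (m y z)) \<and>
     (\<forall>x\<in>S. m x (st x) = x) \<and>
     (\<forall>x\<in>S. \<forall>y\<in>S. m (st x) (st y) = m (st y) (st x)) \<and>
     (\<forall>x\<in>S. \<forall>y\<in>S. st (m x (st y)) = m (st x) (st y)) \<and>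
     (\<forall>x\<in>S. \<forall>y\<in>S. m (st x) y = m y (st (m x y))) \<and>
     (\<forall>x\<in>S. m (pl x) x = x) \<and>
     (\<forall>x\<in>S. \<forall>y\<in>S. m (pl x) (pl y) = m (pl y) (pl x)) \<and>
     (\<forall>x\<in>S. \<forall>y\<in>S. pl (m (pl x) y) = m (pl x) (pl y)) \<and>
     (\<forall>x\<in>S. \<forall>y\<in>S. m x (pl y) = m (pl (m x y)) x) \<and>
     (\<forall>x\<in>S. st (pl x) = pl x) \<and>
     (\<forall>x\<in>S. pl (st x) = st x)"

definition projections :: "'b set \<Rightarrow> ('b \<Rightarrow> 'b) \<Rightarrow> 'b set" where
  "projections S st = st ` S"

definition rsigma :: "'b set \<Rightarrow> ('b \<Rightarrow> 'b \<Rightarrow> 'b) \<Rightarrow> ('b \<Rightarrow> 'b) \<Rightarrow> 'b \<Rightarrow> 'b \<Rightarrow> bool" where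
  "rsigma S m st a b \<longleftrightarrow> (\<exists>e\<in>projections S st. m e a = m e b)"

definition nat_le :: "'b set \<Rightarrow> ('b \<Rightarrow> 'b \<Rightarrow> 'b) \<Rightarrow> ('b \<Rightarrow> 'b) \<Rightarrow> 'b \<Rightarrow> 'b \<Rightarrow> bool" where
  "nat_le S m st a b \<longleftrightarrow> (\<exists>e\<in>projections S st. a = m e b)"

definition proper_rs ::
  "'b set \<Rightarrow> ('b \<Rightarrow> 'b \<Rightarrow> 'b) \<Rightarrow> ('b \<Rightarrow> 'b) \<Rightarrow> ('b \<Rightarrow> 'b) \<Rightarrow> bool" where
  "proper_rs S m st pl \<longleftrightarrow>
     (\<forall>a\<in>S. \<forall>b\<in>S. st a = st b \<and> rsigma S m st a b \<longrightarrow> a = b) \<and>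
     (\<forall>a\<in>S. \<forall>b\<in>S. pl a = pl b \<and> rsigma S m st a b \<longrightarrow> a = b)"

definition F_restriction :: "'b set \<Rightarrow> ('b \<Rightarrow> 'b \<Rightarrow> 'b) \<Rightarrow> ('b \<Rightarrow> 'b) \<Rightarrow> bool" where
  "F_restriction S m st \<longleftrightarrow>
     (\<forall>a\<in>S. \<exists>u\<in>S. rsigma S m st u a \<and>
        (\<forall>b\<in>S. rsigma S m st b a \<longrightarrow> nat_le S m st b u))"

definition has_identity :: "'b set \<Rightarrow> ('b \<Rightarrow> 'b \<Rightarrow> 'b) \<Rightarrow> bool" where
  "has_identity S m \<longleftrightarrow> (\<exists>u\<in>S. \<forall>x\<in>S. m u x = x \<and> m x u = x)"

text \<open>Underlying left partial action of S/sigma on P(S); sigma-classes are represented by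
 elements a of S.\<close>
definition upa_defined ::
  "'b set \<Rightarrow> ('b \<Rightarrow> 'b \<Rightarrow> 'b) \<Rightarrow> ('b \<Rightarrow> 'b) \<Rightarrow> 'b \<Rightarrow> 'b \<Rightarrow> bool" where
  "upa_defined S m st a e \<longleftrightarrow> (\<exists>c\<in>S. rsigma S m st c a \<and> nat_le S m st e (st c))"

definition upa_val ::
  "'b set \<Rightarrow> ('b \<Rightarrow> 'b \<Rightarrow> 'b) \<Rightarrow> ('b \<Rightarrow> 'b) \<Rightarrow> ('b \<Rightarrow> 'b) \<Rightarrow> 'b \<Rightarrow> 'b \<Rightarrow> 'b" where
  "upa_val S m st pl a e =
     pl (m (SOME c. c \<in> S \<and> rsigma S m st c a \<and> nat_le S m st e (st c)) e)"

definition upa_partially_defined ::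
  "'b set \<Rightarrow> ('b \<Rightarrow> 'b \<Rightarrow> 'b) \<Rightarrow> ('b \<Rightarrow> 'b) \<Rightarrow> ('b \<Rightarrow> 'b) \<Rightarrow> bool" where
  "upa_partially_defined S m st pl \<longleftrightarrow>
     (\<forall>a\<in>S. \<forall>b\<in>S. \<forall>e\<in>projections S st.
        upa_defined S m st (m a b) e \<longleftrightarrow>
          (upa_defined S m st b e \<and> upa_defined S m st a (upa_val S m st pl b e)))"

definition ultra_F_restriction_monoid ::
  "'b set \<Rightarrow> ('b \<Rightarrow> 'b \<Rightarrow> 'b) \<Rightarrow> ('b \<Rightarrow> 'b) \<Rightarrow> ('b \<Rightarrow> 'b) \<Rightarrow> bool" where
  "ultra_F_restriction_monoid S m st pl \<longleftrightarrow>
     restriction_semigroup S m st pl \<and> has_identity S m \<and>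
     proper_rs S m st pl \<and> upa_partially_defined S m st pl \<and> F_restriction S m st"

definition arrow :: "('a list \<Rightarrow> 'y \<Rightarrow> 'y option) \<Rightarrow> 'y \<times> 'a list \<Rightarrow> 'y \<times> 'a list \<Rightarrow> bool" where
  "arrow act p q \<longleftrightarrow> (\<exists>r. snd p = snd q @ r \<and> act r (fst p) = Some (fst q))"

definition simrel :: "('a list \<Rightarrow> 'y \<Rightarrow> 'y option) \<Rightarrow> 'y \<times> 'a list \<Rightarrow> 'y \<times> 'a list \<Rightarrow> bool" where
  "simrel act = (\<lambda>p q. arrow act p q \<or> arrow act q p)\<^sup>*\<^sup>*"

definition simcls :: "('a list \<Rightarrow> 'y \<Rightarrow> 'y option) \<Rightarrow> 'y \<times> 'a list \<Rightarrow> ('y \<times> 'a list) set" where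
  "simcls act p = {q. simrel act p q}"

text \<open>cls_le act B A means A >= B: there are (x,s) in A and (y,s) in B with x >= y.\<close>
definition cls_le :: "('a list \<Rightarrow> 'y::order \<Rightarrow> 'y option) \<Rightarrow>
    ('y \<times> 'a list) set \<Rightarrow> ('y \<times> 'a list) set \<Rightarrow> bool" where
  "cls_le act B A \<longleftrightarrow> (\<exists>x y s. (x, s) \<in> A \<and> (y, s) \<in> B \<and> y \<le> x)"

definition approx :: "('a list \<Rightarrow> 'y::order \<Rightarrow> 'y option) \<Rightarrow> 'y \<times> 'a list \<Rightarrow> 'y \<times> 'a list \<Rightarrow> bool" where
  "approx act p q \<longleftrightarrow> cls_le act (simcls act p) (simcls act q) \<and> cls_le act (simcls act q) (simcls act p)"

definition Xcls :: "('a list \<Rightarrow> 'y::order \<Rightarrow> 'y option) \<Rightarrow> 'y \<times> 'a list \<Rightarrow> ('y \<times> 'a list) set" where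
  "Xcls act p = {q. approx act p q}"

definition Xset :: "('a list \<Rightarrow> 'y::order \<Rightarrow> 'y option) \<Rightarrow> ('y \<times> 'a list) set set" where
  "Xset act = range (Xcls act)"

definition Xle :: "('a list \<Rightarrow> 'y::order \<Rightarrow> 'y option) \<Rightarrow>
    ('y \<times> 'a list) set \<Rightarrow> ('y \<times> 'a list) set \<Rightarrow> bool" where
  "Xle act P Q \<longleftrightarrow> (\<exists>p\<in>P. \<exists>q\<in>Q. cls_le act (simcls act p) (simcls act q))"

definition Xact :: "('a list \<Rightarrow> 'y::order \<Rightarrow> 'y option) \<Rightarrow> 'a list \<Rightarrow>
    ('y \<times> 'a list) set \<Rightarrow> ('y \<times> 'a list) set" where
  "Xact act t P = (let p = (SOME p. p \<in> P) in Xcls act (fst p, t @ snd p))"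

definition Xmeet :: "('a list \<Rightarrow> 'y::order \<Rightarrow> 'y option) \<Rightarrow>
    ('y \<times> 'a list) set \<Rightarrow> ('y \<times> 'a list) set \<Rightarrow> ('y \<times> 'a list) set" where
  "Xmeet act P Q = (THE M. M \<in> Xset act \<and> Xle act M P \<and> Xle act M Q \<and>
      (\<forall>R\<in>Xset act. Xle act R P \<and> Xle act R Q \<longrightarrow> Xle act R M))"

type_synonym ('a, 'y) Xel = "('y \<times> 'a list) set"

definition W_car :: "('a list \<Rightarrow> 'y::order \<Rightarrow> 'y option) \<Rightarrow> (('a, 'y) Xel \<times> 'a list) set" where
  "W_car act = {(Xact act t y, t) | y t. y \<in> Xset act}"

definition W_mult :: "('a list \<Rightarrow> 'y::order \<Rightarrow> 'y option) \<Rightarrow>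
    ('a, 'y) Xel \<times> 'a list \<Rightarrow> ('a, 'y) Xel \<times> 'a list \<Rightarrow> ('a, 'y) Xel \<times> 'a list" where
  "W_mult act p q = (case p of (a, t) \<Rightarrow> case q of (b, s) \<Rightarrow>
      (Xmeet act a (Xact act (t @ s) (SOME x. x \<in> Xset act \<and> b = Xact act s x)), t @ s))"

definition W_star :: "('a list \<Rightarrow> 'y::order \<Rightarrow> 'y option) \<Rightarrow>
    ('a, 'y) Xel \<times> 'a list \<Rightarrow> ('a, 'y) Xel \<times> 'a list" where
  "W_star act p = (case p of (a, t) \<Rightarrow> (SOME y. y \<in> Xset act \<and> a = Xact act t y, []))"

definition W_plus :: "('a, 'y) Xel \<times> 'a list \<Rightarrow> ('a, 'y) Xel \<times> 'a list" where
  "W_plus p = (case p of (a, t) \<Rightarrow> (a, []))"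

end

theory Submission
  imports Defs
begin



fun lcp :: "'a list \<Rightarrow> 'a list \<Rightarrow> 'a list" where
  "lcp (x#xs) (y#ys) = (if x = y then x # lcp xs ys else [])"
| "lcp _ _ = []"

lemma lcp_pre1: "\<exists>w. xs = lcp xs ys @ w"
  by (induction xs ys rule: lcp.induct) auto

lemma lcp_pre2: "\<exists>w. ys = lcp xs ys @ w"
  by (induction xs ys rule: lcp.induct) auto

lemma lcp_max: "xs = v @ w1 \<Longrightarrow> ys = v @ w2 \<Longrightarrow> \<exists>w. lcp xs ys = v @ w"
proof (induction xs ys arbitrary: v rule: lcp.induct)
  case (1 x xs y ys)
  show ?case
  proof (cases v)
    case Nil then show ?thesis by auto
  next
    case (Cons a v')
    with 1 show ?thesis by auto
  qed
qed auto

locale ctx =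
  fixes act :: "'a list \<Rightarrow> 'y::semilattice_inf \<Rightarrow> 'y option"
  assumes lpa: "left_partial_action act" and axA: "axiom_A act" and axB: "axiom_B act"
    and axC: "axiom_C act" and pda: "partially_defined_action act"
    and ultra: "ultra_F_restriction_monoid (M_car act) (M_mult act) (M_star act) M_plus"
begin

lemma act_nil: "act [] y = Some y" using lpa unfolding left_partial_action_def by blast

lemma comp: "act (s@t) x = Some w \<longleftrightarrow> (\<exists>y. act t x = Some y \<and> act s y = Some w)"
proof
  assume h: "act (s@t) x = Some w"
  then have "act t x \<noteq> None \<and> act s (the (act t x)) \<noteq> None"
    using pda unfolding partially_defined_action_def by (metis option.distinct(1))
  then obtain y w' where a: "act t x = Some y" "act s y = Some w'" by auto
  then have "act (s@t) x = Some w'" using lpa unfolding left_partial_action_def by blast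
  with h a show "\<exists>y. act t x = Some y \<and> act s y = Some w" by auto
next
  assume "\<exists>y. act t x = Some y \<and> act s y = Some w"
  then show "act (s@t) x = Some w" using lpa unfolding left_partial_action_def by blast
qed

lemma inj: "act t x = Some z \<Longrightarrow> act t x' = Some z \<Longrightarrow> x = x'"
proof -
  assume a: "act t x = Some z" "act t x' = Some z"
  have "inj_on (\<lambda>y. the (act t y)) (pdom act t)" using axB unfolding axiom_B_def bij_betw_def by blast
  moreover have "x \<in> pdom act t" "x' \<in> pdom act t" using a by (auto simp: pdom_def)
  ultimately show ?thesis using a by (metis inj_onD option.sel)
qed

lemma mono: "act t x = Some a \<Longrightarrow> act t y = Some b \<Longrightarrow> x \<le> y \<longleftrightarrow> a \<le> b"
proof -
  assume a: "act t x = Some a" "act t y = Some b"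
  have "x \<in> pdom act t" "y \<in> pdom act t" using a by (auto simp: pdom_def)
  then show ?thesis using axB a unfolding axiom_B_def by (metis option.sel)
qed

lemma dom_ideal: "act t x = Some a \<Longrightarrow> y \<le> x \<Longrightarrow> \<exists>b. act t y = Some b"
  using axA unfolding axiom_A_def order_ideal_def pdom_def by blast

lemma ran_ideal: "act t x = Some a \<Longrightarrow> b \<le> a \<Longrightarrow> \<exists>y. act t y = Some b"
  using axA unfolding axiom_A_def order_ideal_def pran_def by blast

lemma ract_iff: "ract act y t = Some z \<longleftrightarrow> act t z = Some y"
proof
  assume h: "ract act y t = Some z"
  then have "y \<in> pran act t" unfolding ract_def by (auto split: if_splits)
  then obtain x0 where x0: "act t x0 = Some y" unfolding pran_def by blast
  have "(THE x. act t x = Some y) = x0" using x0 inj by blast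
  with h x0 show "act t z = Some y" unfolding ract_def by (auto split: if_splits)
next
  assume h: "act t z = Some y"
  then have "y \<in> pran act t" unfolding pran_def by blast
  moreover have "(THE x. act t x = Some y) = z" using h inj by blast
  ultimately show "ract act y t = Some z" unfolding ract_def by simp
qed

lemma Mcar: "(y,t) \<in> M_car act \<longleftrightarrow> (\<exists>z. act t z = Some y)"
  unfolding M_car_def using ract_iff by (metis (mono_tags, lifting) case_prodI mem_Collect_eq not_None_eq old.prod.case)

lemma proj_form: "e \<in> projections (M_car act) (M_star act) \<Longrightarrow> \<exists>k. e = (k, [])"
  unfolding projections_def M_star_def by auto

lemma proj_in: "(k, []) \<in> projections (M_car act) (M_star act)"
proof -
  have "ract act k [] = Some k" using ract_iff act_nil by blast
  then have "(k,[]) \<in> M_car act" "M_star act (k,[]) = (k,[])" unfolding M_car_def M_star_def by auto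
  then show ?thesis unfolding projections_def by (metis image_eqI)
qed

lemma mult_proj: "M_mult act (k, []) (w, t) = (inf k w, t)"
proof -
  have "ract act k [] = Some k" using ract_iff act_nil by blast
  then show ?thesis unfolding M_mult_def by (simp add: act_nil)
qed

lemma maxel: "\<exists>md mu. act t md = Some mu \<and> (\<forall>x z. act t x = Some z \<longrightarrow> x \<le> md \<and> z \<le> mu)"
proof -
  have F: "F_restriction (M_car act) (M_mult act) (M_star act)"
    using ultra unfolding ultra_F_restriction_monoid_def by blast
  obtain x0 z0 where x0: "act t x0 = Some z0" using axC unfolding axiom_C_def pdom_def by blast
  then have aS: "(z0, t) \<in> M_car act" using Mcar by blast
  then obtain u where uS: "u \<in> M_car act" and us: "rsigma (M_car act) (M_mult act) (M_star act) u (z0,t)"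
    and ub: "\<forall>b\<in>M_car act. rsigma (M_car act) (M_mult act) (M_star act) b (z0,t)
        \<longrightarrow> nat_le (M_car act) (M_mult act) (M_star act) b u"
    using F unfolding F_restriction_def by blast
  obtain mu tu where u: "u = (mu, tu)" by (cases u)
  have tu: "tu = t"
  proof -
    obtain e where "e \<in> projections (M_car act) (M_star act)" "M_mult act e u = M_mult act e (z0,t)"
      using us unfolding rsigma_def by blast
    then obtain k where "M_mult act (k,[]) u = M_mult act (k,[]) (z0,t)" using proj_form by blast
    then show ?thesis using u mult_proj by simp
  qed
  obtain md where md: "act t md = Some mu" using uS u tu Mcar by blast
  have "\<forall>x z. act t x = Some z \<longrightarrow> x \<le> md \<and> z \<le> mu"
  proof (intro allI impI)
    fix x z assume h: "act t x = Some z"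
    then have bS: "(z,t) \<in> M_car act" using Mcar by blast
    have "M_mult act (inf z z0, []) (z,t) = M_mult act (inf z z0, []) (z0,t)"
      unfolding mult_proj by (simp add: inf.absorb1)
    then have "rsigma (M_car act) (M_mult act) (M_star act) (z,t) (z0,t)"
      unfolding rsigma_def using proj_in by blast
    then have "nat_le (M_car act) (M_mult act) (M_star act) (z,t) u" using ub bS by blast
    then obtain k where "(z,t) = M_mult act (k,[]) u" unfolding nat_le_def using proj_form by blast
    then have zle: "z \<le> mu" using u mult_proj by simp
    then show "x \<le> md \<and> z \<le> mu" using mono[OF h md] by simp
  qed
  then show ?thesis using md by blast
qed

end
context ctx begin

lemma arrow_iff: "arrow act (x,s) (z,t) \<longleftrightarrow> (\<exists>r. s = t@r \<and> act r x = Some z)"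
  by (simp add: arrow_def)

lemma arrow_refl: "arrow act p p"
  by (cases p) (auto simp: arrow_iff act_nil intro: exI[of _ "[]"])

lemma arrow_trans: "arrow act p q \<Longrightarrow> arrow act q r \<Longrightarrow> arrow act p r"
proof -
  assume a: "arrow act p q" "arrow act q r"
  obtain x s y t z u where pqr: "p = (x,s)" "q = (y,t)" "r = (z,u)" by (metis prod.exhaust)
  from a pqr obtain r1 r2 where "s = t@r1" "act r1 x = Some y" "t = u@r2" "act r2 y = Some z"
    by (auto simp: arrow_iff)
  then have "s = u@(r2@r1)" "act (r2@r1) x = Some z" using comp by auto
  then show ?thesis using pqr arrow_iff by blast
qed

lemma arrow_confl: "arrow act q r1 \<Longrightarrow> arrow act q r2 \<Longrightarrow> arrow act r1 r2 \<or> arrow act r2 r1"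
proof -
  assume a: "arrow act q r1" "arrow act q r2"
  obtain x s z1 t1 z2 t2 where pqr: "q = (x,s)" "r1 = (z1,t1)" "r2 = (z2,t2)" by (metis prod.exhaust)
  from a pqr obtain p1 p2 where h: "s = t1@p1" "act p1 x = Some z1" "s = t2@p2" "act p2 x = Some z2"
    using arrow_iff by (metis (no_types))
  then have "t1@p1 = t2@p2" by simp
  then obtain us where "(t1 = t2 @ us \<and> us @ p1 = p2) \<or> (t1 @ us = t2 \<and> p1 = us @ p2)"
    by (auto simp: append_eq_append_conv2)
  then show ?thesis
  proof
    assume c: "t1 = t2 @ us \<and> us @ p1 = p2"
    then have "act (us@p1) x = Some z2" using h by simp
    then obtain y where "act p1 x = Some y" "act us y = Some z2" using comp by blast
    then have "act us z1 = Some z2" using h by simp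
    then show ?thesis using c pqr arrow_iff by blast
  next
    assume c: "t1 @ us = t2 \<and> p1 = us @ p2"
    then have "act (us@p2) x = Some z1" using h by simp
    then obtain y where "act p2 x = Some y" "act us y = Some z1" using comp by blast
    then have "act us z2 = Some z1" using h by simp
    then show ?thesis using c pqr arrow_iff by blast
  qed
qed

lemma simrel_iff: "simrel act p q \<longleftrightarrow> (\<exists>r. arrow act p r \<and> arrow act q r)"
proof
  assume "simrel act p q"
  then show "\<exists>r. arrow act p r \<and> arrow act q r" unfolding simrel_def
  proof (induction rule: rtranclp_induct)
    case base then show ?case using arrow_refl by blast
  next
    case (step q q')
    then obtain r where r: "arrow act p r" "arrow act q r" by blast
    from step(2) show ?case
    proof
      assume "arrow act q q'"
      then have "arrow act r q' \<or> arrow act q' r" using arrow_confl r by blast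
      then show ?thesis using r arrow_trans arrow_refl by blast
    next
      assume "arrow act q' q"
      then show ?thesis using r arrow_trans by blast
    qed
  qed
next
  assume "\<exists>r. arrow act p r \<and> arrow act q r"
  then obtain r where r: "arrow act p r" "arrow act q r" by blast
  have "(\<lambda>p q. arrow act p q \<or> arrow act q p)\<^sup>*\<^sup>* p r" using r by (intro r_into_rtranclp) simp
  moreover have "(\<lambda>p q. arrow act p q \<or> arrow act q p)\<^sup>*\<^sup>* r q" using r by (intro r_into_rtranclp) simp
  ultimately show "simrel act p q" unfolding simrel_def by (rule rtranclp_trans)
qed

lemma simrel_refl: "simrel act p p" using simrel_iff arrow_refl by blast
lemma simrel_sym: "simrel act p q \<Longrightarrow> simrel act q p" using simrel_iff by blast
lemma simrel_trans: "simrel act p q \<Longrightarrow> simrel act q r \<Longrightarrow> simrel act p r"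
proof -
  assume "simrel act p q" "simrel act q r"
  then obtain r1 r2 where a: "arrow act p r1" "arrow act q r1" "arrow act q r2" "arrow act r r2"
    using simrel_iff by blast
  then have "arrow act r1 r2 \<or> arrow act r2 r1" using arrow_confl by blast
  then show ?thesis using a arrow_trans simrel_iff by blast
qed
lemma arrow_simrel: "arrow act p q \<Longrightarrow> simrel act p q" using simrel_iff arrow_refl by blast

lemma level_uniq: "simrel act (a,w) (b,w) \<Longrightarrow> a = b"
proof -
  assume "simrel act (a,w) (b,w)"
  then obtain c v where "arrow act (a,w) (c,v)" "arrow act (b,w) (c,v)" using simrel_iff by (metis prod.exhaust)
  then obtain r1 r2 where "w = v@r1" "act r1 a = Some c" "w = v@r2" "act r2 b = Some c"
    by (auto simp: arrow_iff)
  then show ?thesis using inj by auto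
qed

lemma down: "arrow act (x,s) (c,u) \<Longrightarrow> y \<le> x \<Longrightarrow> \<exists>d. arrow act (y,s) (d,u) \<and> d \<le> c"
proof -
  assume a: "arrow act (x,s) (c,u)" "y \<le> x"
  then obtain r where r: "s = u@r" "act r x = Some c" by (auto simp: arrow_iff)
  then obtain d where d: "act r y = Some d" using dom_ideal a by blast
  then have "d \<le> c" using mono[OF d r(2)] a by simp
  then show ?thesis using r d arrow_iff by blast
qed

lemma up: "arrow act (x,s) (c,u) \<Longrightarrow> d \<le> c \<Longrightarrow> \<exists>y. arrow act (y,s) (d,u) \<and> y \<le> x"
proof -
  assume a: "arrow act (x,s) (c,u)" "d \<le> c"
  then obtain r where r: "s = u@r" "act r x = Some c" by (auto simp: arrow_iff)
  then obtain y where d: "act r y = Some d" using ran_ideal a by blast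
  then have "y \<le> x" using mono[OF d r(2)] a by simp
  then show ?thesis using r d arrow_iff by blast
qed

lemma simcls_eq: "simrel act p q \<Longrightarrow> simcls act p = simcls act q"
  unfolding simcls_def using simrel_trans simrel_sym by blast

lemma LE: "cls_le act (simcls act r) (simcls act (a,sa)) \<longleftrightarrow> (\<exists>c. simrel act r (c,sa) \<and> c \<le> a)"
proof
  assume "cls_le act (simcls act r) (simcls act (a,sa))"
  then obtain x y s where h: "simrel act (a,sa) (x,s)" "simrel act r (y,s)" "y \<le> x"
    unfolding cls_le_def simcls_def by blast
  then obtain e u where eu: "arrow act (a,sa) (e,u)" "arrow act (x,s) (e,u)"
    using simrel_iff by (metis prod.exhaust)
  obtain d where d: "arrow act (y,s) (d,u)" "d \<le> e" using down[OF eu(2) h(3)] by blast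
  obtain y' where y': "arrow act (y',sa) (d,u)" "y' \<le> a" using up[OF eu(1) d(2)] by blast
  have "simrel act r (y',sa)"
    using h(2) arrow_simrel[OF d(1)] simrel_sym[OF arrow_simrel[OF y'(1)]] simrel_trans by blast
  then show "\<exists>c. simrel act r (c,sa) \<and> c \<le> a" using y' by blast
next
  assume "\<exists>c. simrel act r (c,sa) \<and> c \<le> a"
  then show "cls_le act (simcls act r) (simcls act (a,sa))"
    unfolding cls_le_def simcls_def using simrel_refl by blast
qed

definition leq where "leq p q \<longleftrightarrow> cls_le act (simcls act p) (simcls act q)"

lemma leq_LE: "leq r (a,sa) \<longleftrightarrow> (\<exists>c. simrel act r (c,sa) \<and> c \<le> a)"
  using LE leq_def by simp

lemma leq_refl: "leq p p" by (cases p) (auto simp: leq_LE intro: simrel_refl)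

lemma leq_cong: "simrel act p p' \<Longrightarrow> simrel act q q' \<Longrightarrow> leq p q \<longleftrightarrow> leq p' q'"
  unfolding leq_def using simcls_eq by metis

lemma leq_trans: "leq p q \<Longrightarrow> leq q r \<Longrightarrow> leq p r"
proof -
  assume a: "leq p q" "leq q r"
  obtain b sb c sc where qr: "q = (b,sb)" "r = (c,sc)" by (metis prod.exhaust)
  obtain y where y: "simrel act (b,sb) (y,sc)" "y \<le> c" using a(2) qr leq_LE by blast
  have "leq p (y,sc)" using a(1) qr leq_cong[OF simrel_refl y(1)] by simp
  then obtain x where "simrel act p (x,sc)" "x \<le> y" using leq_LE by blast
  then show ?thesis using qr y leq_LE order_trans by blast
qed

lemma leq_antisym: "leq p q \<Longrightarrow> leq q p \<Longrightarrow> simrel act p q"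
proof -
  assume a: "leq p q" "leq q p"
  obtain b sb where q: "q = (b,sb)" by (metis prod.exhaust)
  obtain x where x: "simrel act p (x,sb)" "x \<le> b" using a(1) q leq_LE by blast
  have "leq q (x,sb)" using a(2) leq_cong[OF simrel_refl x(1)] by simp
  then obtain y where y: "simrel act q (y,sb)" "y \<le> x" using leq_LE by blast
  then have "y = b" using q level_uniq simrel_sym by blast
  then have "x = b" using x y by simp
  then show ?thesis using x q by simp
qed

lemma approx_iff: "approx act p q \<longleftrightarrow> simrel act p q"
proof
  assume "approx act p q" then show "simrel act p q"
    using leq_antisym unfolding approx_def leq_def by blast
next
  assume "simrel act p q" then show "approx act p q"
    unfolding approx_def using leq_refl leq_cong simrel_refl leq_def by metis
qed

lemma Xcls_eq: "Xcls act p = simcls act p"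
  unfolding Xcls_def simcls_def approx_iff ..

lemma Xcls_eqI: "simrel act p q \<Longrightarrow> Xcls act p = Xcls act q"
  using Xcls_eq simcls_eq by simp

lemma Xcls_iff: "Xcls act p = Xcls act q \<longleftrightarrow> simrel act p q"
  using Xcls_eqI Xcls_eq simrel_refl unfolding simcls_def by blast

lemma Xle_iff: "Xle act (Xcls act p) (Xcls act q) \<longleftrightarrow> leq p q"
  unfolding Xle_def Xcls_eq leq_def
  by (metis mem_Collect_eq simcls_def simcls_eq simrel_refl)

lemma Xset_E: "P \<in> Xset act \<Longrightarrow> \<exists>a s. P = Xcls act (a,s)"
  unfolding Xset_def by auto

end
context ctx begin

lemma meet_ex: "\<exists>m. leq m p \<and> leq m q \<and> (\<forall>r. leq r p \<and> leq r q \<longrightarrow> leq r m)"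
proof -
  obtain a sa b sb where pq: "p = (a,sa)" "q = (b,sb)" by (metis prod.exhaust)
  define u where "u = lcp sa sb"
  obtain q1 where q1: "sa = u@q1" using lcp_pre1 u_def by blast
  obtain q2 where q2: "sb = u@q2" using lcp_pre2 u_def by blast
  obtain md1 mu1 where m1: "act q1 md1 = Some mu1" "\<forall>x z. act q1 x = Some z \<longrightarrow> x \<le> md1 \<and> z \<le> mu1"
    using maxel by blast
  obtain md2 mu2 where m2: "act q2 md2 = Some mu2" "\<forall>x z. act q2 x = Some z \<longrightarrow> x \<le> md2 \<and> z \<le> mu2"
    using maxel by blast
  obtain \<alpha> where al: "act q1 (inf a md1) = Some \<alpha>" using dom_ideal[OF m1(1)] by (meson inf.cobounded2)
  obtain \<beta> where be: "act q2 (inf b md2) = Some \<beta>" using dom_ideal[OF m2(1)] by (meson inf.cobounded2)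
  define m where "m = (inf \<alpha> \<beta>, u)"
  have "leq m p"
  proof -
    obtain z where z: "act q1 z = Some (inf \<alpha> \<beta>)" using ran_ideal[OF al] by (meson inf.cobounded1)
    have "z \<le> inf a md1" using mono[OF z al] by simp
    then have "z \<le> a" by simp
    moreover have "simrel act m (z,sa)" unfolding m_def
      using z q1 arrow_iff arrow_simrel simrel_sym by blast
    ultimately show ?thesis using pq leq_LE by blast
  qed
  moreover have "leq m q"
  proof -
    obtain z where z: "act q2 z = Some (inf \<alpha> \<beta>)" using ran_ideal[OF be] by (meson inf.cobounded2)
    have "z \<le> inf b md2" using mono[OF z be] by simp
    then have "z \<le> b" by simp
    moreover have "simrel act m (z,sb)" unfolding m_def
      using z q2 arrow_iff arrow_simrel simrel_sym by blast
    ultimately show ?thesis using pq leq_LE by blast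
  qed
  moreover have "\<forall>r. leq r p \<and> leq r q \<longrightarrow> leq r m"
  proof (intro allI impI)
    fix r assume h: "leq r p \<and> leq r q"
    obtain c1 where c1: "simrel act r (c1,sa)" "c1 \<le> a" using h pq leq_LE by blast
    obtain c2 where c2: "simrel act r (c2,sb)" "c2 \<le> b" using h pq leq_LE by blast
    have "simrel act (c1,sa) (c2,sb)" using c1 c2 simrel_sym simrel_trans by blast
    then obtain e v where ev: "arrow act (c1,sa) (e,v)" "arrow act (c2,sb) (e,v)"
      using simrel_iff by (metis prod.exhaust)
    then obtain w1 w2 where w: "sa = v@w1" "act w1 c1 = Some e" "sb = v@w2" "act w2 c2 = Some e"
      using arrow_iff by (metis (no_types))
    obtain w where w0: "u = v@w" using lcp_max[OF w(1) w(3)] u_def by blast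
    have "w1 = w@q1" using w(1) q1 w0 by simp
    then obtain g1 where g1: "act q1 c1 = Some g1" using w(2) comp by blast
    have "w2 = w@q2" using w(3) q2 w0 by simp
    then obtain g2 where g2: "act q2 c2 = Some g2" using w(4) comp by blast
    have a1: "arrow act (c1,sa) (g1,u)" using g1 q1 arrow_iff by blast
    have a2: "arrow act (c2,sb) (g2,u)" using g2 q2 arrow_iff by blast
    have "simrel act (g1,u) (g2,u)"
      using arrow_simrel[OF a1] arrow_simrel[OF a2] \<open>simrel act (c1,sa) (c2,sb)\<close>
        simrel_sym simrel_trans by blast
    then have geq: "g1 = g2" using level_uniq by blast
    have "c1 \<le> inf a md1" using c1(2) m1(2) g1 by simp
    then have "g1 \<le> \<alpha>" using mono[OF g1 al] by simp
    moreover have "c2 \<le> inf b md2" using c2(2) m2(2) g2 by simp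
    then have "g2 \<le> \<beta>" using mono[OF g2 be] by simp
    ultimately have "g1 \<le> inf \<alpha> \<beta>" using geq by simp
    moreover have "simrel act r (g1,u)" using c1(1) arrow_simrel[OF a1] simrel_trans by blast
    ultimately show "leq r m" unfolding m_def using leq_LE by blast
  qed
  ultimately show ?thesis by blast
qed

theorem part1:
    "((\<forall>P\<in>Xset act. Xle act P P) \<and>
      (\<forall>P\<in>Xset act. \<forall>Q\<in>Xset act. Xle act P Q \<and> Xle act Q P \<longrightarrow> P = Q) \<and>
      (\<forall>P\<in>Xset act. \<forall>Q\<in>Xset act. \<forall>R\<in>Xset act. Xle act P Q \<and> Xle act Q R \<longrightarrow> Xle act P R) \<and>
      (\<forall>P\<in>Xset act. \<forall>Q\<in>Xset act. \<exists>M\<in>Xset act. Xle act M P \<and> Xle act M Q \<and>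
          (\<forall>R\<in>Xset act. Xle act R P \<and> Xle act R Q \<longrightarrow> Xle act R M)))"
proof (intro conjI ballI impI)
  fix P assume "P \<in> Xset act" then obtain a s where "P = Xcls act (a,s)" using Xset_E by blast
  then show "Xle act P P" using Xle_iff leq_refl by simp
next
  fix P Q assume "P \<in> Xset act" "Q \<in> Xset act" "Xle act P Q \<and> Xle act Q P"
  moreover obtain a s b w where "P = Xcls act (a,s)" "Q = Xcls act (b,w)" using Xset_E \<open>P \<in> Xset act\<close> \<open>Q \<in> Xset act\<close> by blast
  ultimately show "P = Q" using Xle_iff leq_antisym Xcls_eqI by simp
next
  fix P Q R assume "P \<in> Xset act" "Q \<in> Xset act" "R \<in> Xset act" "Xle act P Q \<and> Xle act Q R"
  moreover obtain a s where "P = Xcls act (a,s)" using Xset_E \<open>P \<in> Xset act\<close> by blast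
  moreover obtain b w where "Q = Xcls act (b,w)" using Xset_E \<open>Q \<in> Xset act\<close> by blast
  moreover obtain c v where "R = Xcls act (c,v)" using Xset_E \<open>R \<in> Xset act\<close> by blast
  ultimately show "Xle act P R" using Xle_iff leq_trans by (simp, blast)
next
  fix P Q assume "P \<in> Xset act" "Q \<in> Xset act"
  then obtain p q where pq: "P = Xcls act p" "Q = Xcls act q" using Xset_E by blast
  obtain m where m: "leq m p" "leq m q" "\<forall>r. leq r p \<and> leq r q \<longrightarrow> leq r m" using meet_ex by blast
  have "Xcls act m \<in> Xset act" unfolding Xset_def by simp
  moreover have "\<forall>R\<in>Xset act. Xle act R P \<and> Xle act R Q \<longrightarrow> Xle act R (Xcls act m)"
  proof (intro ballI impI)
    fix R assume "R \<in> Xset act" "Xle act R P \<and> Xle act R Q"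
    moreover obtain r where "R = Xcls act r" using Xset_E \<open>R \<in> Xset act\<close> by blast
    ultimately show "Xle act R (Xcls act m)" using m(3) pq Xle_iff by (simp, blast)
  qed
  ultimately show "\<exists>M\<in>Xset act. Xle act M P \<and> Xle act M Q \<and>
          (\<forall>R\<in>Xset act. Xle act R P \<and> Xle act R Q \<longrightarrow> Xle act R M)"
    using m pq Xle_iff by blast
qed

lemma simrel_prefix: "simrel act (x,w) (x',w') \<Longrightarrow> simrel act (x,t@w) (x',t@w')"
proof -
  assume "simrel act (x,w) (x',w')"
  then obtain e v where "arrow act (x,w) (e,v)" "arrow act (x',w') (e,v)"
    using simrel_iff by (metis prod.exhaust)
  then have "arrow act (x,t@w) (e,t@v)" "arrow act (x',t@w') (e,t@v)" by (auto simp: arrow_iff)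
  then show ?thesis using simrel_iff by blast
qed

lemma simrel_cancel: "simrel act (x,t@w) (x',t@w') \<Longrightarrow> simrel act (x,w) (x',w')"
proof -
  assume "simrel act (x,t@w) (x',t@w')"
  then obtain e v where "arrow act (x,t@w) (e,v)" "arrow act (x',t@w') (e,v)"
    using simrel_iff by (metis prod.exhaust)
  then obtain w1 w2 where w: "t@w = v@w1" "act w1 x = Some e" "t@w' = v@w2" "act w2 x' = Some e"
    using arrow_iff by (metis (no_types))
  obtain us where "(t = v @ us \<and> us @ w = w1) \<or> (t @ us = v \<and> w = us @ w1)"
    using w(1) by (auto simp: append_eq_append_conv2)
  then show ?thesis
  proof
    assume c: "t = v @ us \<and> us @ w = w1"
    then have "w2 = us@w'" using w(3) by simp
    then obtain g' where g': "act w' x' = Some g'" "act us g' = Some e" using w(4) comp by blast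
    obtain g where g: "act w x = Some g" "act us g = Some e" using w(2) c comp by blast
    have "g = g'" using g g' inj by blast
    then have "arrow act (x,w) (g,[])" "arrow act (x',w') (g,[])" using g g' by (auto simp: arrow_iff)
    then show ?thesis using simrel_iff by blast
  next
    assume c: "t @ us = v \<and> w = us @ w1"
    then have "w' = us@w2" using w(3) by auto
    then have "arrow act (x,w) (e,us)" "arrow act (x',w') (e,us)" using c w by (auto simp: arrow_iff)
    then show ?thesis using simrel_iff by blast
  qed
qed

lemma Xact_Xcls: "Xact act t (Xcls act (x,w)) = Xcls act (x, t@w)"
proof -
  have "(x,w) \<in> Xcls act (x,w)" using Xcls_eq simrel_refl simcls_def by blast
  then have "(SOME p. p \<in> Xcls act (x,w)) \<in> Xcls act (x,w)" by (rule someI)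
  then obtain y v where yv: "(SOME p. p \<in> Xcls act (x,w)) = (y,v)" "simrel act (x,w) (y,v)"
    using Xcls_eq simcls_def by (metis mem_Collect_eq prod.exhaust)
  then have "simrel act (x,t@w) (y,t@v)" using simrel_prefix by blast
  then show ?thesis unfolding Xact_def Let_def yv(1) using Xcls_eqI by simp
qed

lemma Xact_inj: "Xact act t (Xcls act p) = Xact act t (Xcls act q) \<Longrightarrow> Xcls act p = Xcls act q"
proof -
  assume h: "Xact act t (Xcls act p) = Xact act t (Xcls act q)"
  obtain a s b w where "p = (a,s)" "q = (b,w)" by (metis prod.exhaust)
  then show ?thesis using h Xact_Xcls Xcls_iff simrel_cancel by simp
qed

theorem part2:
    "((\<forall>t. \<forall>P\<in>Xset act. Xact act t P \<in> Xset act) \<and>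
      (\<forall>P\<in>Xset act. Xact act [] P = P) \<and>
      (\<forall>s t. \<forall>P\<in>Xset act. Xact act (s @ t) P = Xact act s (Xact act t P)) \<and>
      (\<forall>t. \<forall>P\<in>Xset act. \<forall>Q\<in>Xset act. Xle act P Q \<longleftrightarrow> Xle act (Xact act t P) (Xact act t Q)) \<and>
      (\<forall>t. \<forall>Q\<in>Xset act. \<forall>P\<in>Xset act. Xle act P (Xact act t Q) \<longrightarrow>
          (\<exists>R\<in>Xset act. P = Xact act t R)))"
proof (intro conjI allI ballI impI)
  fix t P assume "P \<in> Xset act" then obtain a s where "P = Xcls act (a,s)" using Xset_E by blast
  then show "Xact act t P \<in> Xset act" using Xact_Xcls unfolding Xset_def by simp
next
  fix P assume "P \<in> Xset act" then obtain a s where "P = Xcls act (a,s)" using Xset_E by blast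
  then show "Xact act [] P = P" using Xact_Xcls by simp
next
  fix s t P assume "P \<in> Xset act" then obtain a w where "P = Xcls act (a,w)" using Xset_E by blast
  then show "Xact act (s@t) P = Xact act s (Xact act t P)" using Xact_Xcls by simp
next
  fix t P Q assume "P \<in> Xset act" "Q \<in> Xset act"
  then obtain a sa b sb where pq: "P = Xcls act (a,sa)" "Q = Xcls act (b,sb)" using Xset_E by blast
  have "leq (a,sa) (b,sb) \<longleftrightarrow> leq (a,t@sa) (b,t@sb)"
    unfolding leq_LE using simrel_prefix simrel_cancel by blast
  then show "Xle act P Q \<longleftrightarrow> Xle act (Xact act t P) (Xact act t Q)"
    using pq Xact_Xcls Xle_iff by simp
next
  fix t Q P assume "Q \<in> Xset act" "P \<in> Xset act" "Xle act P (Xact act t Q)"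
  moreover obtain p b sb where pq: "P = Xcls act p" "Q = Xcls act (b,sb)"
    using Xset_E \<open>Q \<in> Xset act\<close> \<open>P \<in> Xset act\<close> by blast
  ultimately have "leq p (b, t@sb)" using Xact_Xcls Xle_iff by simp
  then obtain c where "simrel act p (c, t@sb)" using leq_LE by blast
  then have "P = Xact act t (Xcls act (c,sb))" using pq Xact_Xcls Xcls_eqI by simp
  then show "\<exists>R\<in>Xset act. P = Xact act t R" unfolding Xset_def by blast
qed

end
context ctx begin

lemma some_pre: "act t y0 = Some y \<Longrightarrow>
   (SOME Z. Z \<in> Xset act \<and> Xcls act (y,[]) = Xact act t Z) = Xcls act (y0,[])"
proof -
  assume h: "act t y0 = Some y"
  have e: "Xact act t (Xcls act (y0,[])) = Xcls act (y,[])"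
    unfolding Xact_Xcls using h by (intro Xcls_eqI arrow_simrel) (simp add: arrow_iff)
  show ?thesis
  proof (rule some_equality)
    show "Xcls act (y0,[]) \<in> Xset act \<and> Xcls act (y,[]) = Xact act t (Xcls act (y0,[]))"
      using e unfolding Xset_def by simp
  next
    fix Z assume "Z \<in> Xset act \<and> Xcls act (y,[]) = Xact act t Z"
    moreover then obtain a s where "Z = Xcls act (a,s)" using Xset_E by blast
    ultimately show "Z = Xcls act (y0,[])" using e Xact_inj by metis
  qed
qed

lemma Xle_Xset_antisym: "M \<in> Xset act \<Longrightarrow> M' \<in> Xset act \<Longrightarrow> Xle act M M' \<Longrightarrow> Xle act M' M \<Longrightarrow> M = M'"
  using part1 by blast

theorem part3:
  "\<exists>f. inj_on f (M_car act) \<and> f ` M_car act \<subseteq> W_car act \<and>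
        (\<forall>p\<in>M_car act. \<forall>q\<in>M_car act. f (M_mult act p q) = W_mult act (f p) (f q)) \<and>
        (\<forall>p\<in>M_car act. f (M_star act p) = W_star act (f p)) \<and>
        (\<forall>p\<in>M_car act. f (M_plus p) = W_plus (f p))"
proof (intro exI conjI)
  define f where "f = (\<lambda>p::'y \<times> 'a list. (Xcls act (fst p, []), snd p))"
  show "inj_on f (M_car act)"
  proof (rule inj_onI)
    fix p q assume "f p = f q"
    then have "simrel act (fst p, []) (fst q, [])" "snd p = snd q" unfolding f_def using Xcls_iff by auto
    then show "p = q" using level_uniq prod_eq_iff by metis
  qed
  show "f ` M_car act \<subseteq> W_car act"
  proof
    fix z assume "z \<in> f ` M_car act"
    then obtain y t where yt: "(y,t) \<in> M_car act" "z = f (y,t)" by auto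
    then obtain y0 where y0: "act t y0 = Some y" using Mcar by blast
    have "Xact act t (Xcls act (y0,[])) = Xcls act (y,[])"
      unfolding Xact_Xcls using y0 by (intro Xcls_eqI arrow_simrel) (simp add: arrow_iff)
    then have "z = (Xact act t (Xcls act (y0,[])), t)" using yt f_def by simp
    then show "z \<in> W_car act" unfolding W_car_def Xset_def by blast
  qed
  show "\<forall>p\<in>M_car act. f (M_plus p) = W_plus (f p)"
    unfolding f_def M_plus_def W_plus_def by auto
  show "\<forall>p\<in>M_car act. f (M_star act p) = W_star act (f p)"
  proof
    fix p assume "p \<in> M_car act"
    moreover obtain y t where p: "p = (y,t)" by (metis prod.exhaust)
    ultimately obtain y0 where y0: "act t y0 = Some y" using Mcar by blast
    then have "ract act y t = Some y0" using ract_iff by blast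
    then have "M_star act p = (y0, [])" unfolding p M_star_def by simp
    then show "f (M_star act p) = W_star act (f p)"
      unfolding f_def W_star_def p using some_pre[OF y0] by simp
  qed
  show "\<forall>p\<in>M_car act. \<forall>q\<in>M_car act. f (M_mult act p q) = W_mult act (f p) (f q)"
  proof (intro ballI)
    fix p q assume pq: "p \<in> M_car act" "q \<in> M_car act"
    obtain x s y t where pq': "p = (x,s)" "q = (y,t)" by (metis prod.exhaust)
    obtain x0 where x0: "act s x0 = Some x" using pq pq' Mcar by blast
    obtain y0 where y0: "act t y0 = Some y" using pq pq' Mcar by blast
    have rx: "ract act x s = Some x0" using x0 ract_iff by blast
    obtain v where v: "act s (inf x0 y) = Some v" using dom_ideal[OF x0] by (meson inf.cobounded1)
    have lhs: "f (M_mult act p q) = (Xcls act (v,[]), s@t)"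
      unfolding f_def pq' M_mult_def using rx v by simp
    have act2: "Xact act (s@t) (Xcls act (y0,[])) = Xcls act (y,s)"
      unfolding Xact_Xcls using y0 by (intro Xcls_eqI arrow_simrel) (simp add: arrow_iff)
    have rhs: "W_mult act (f p) (f q) = (Xmeet act (Xcls act (x,[])) (Xcls act (y,s)), s@t)"
      unfolding f_def pq' W_mult_def using some_pre[OF y0] act2 by simp
    have spec: "Xcls act (v,[]) \<in> Xset act \<and> Xle act (Xcls act (v,[])) (Xcls act (x,[])) \<and>
       Xle act (Xcls act (v,[])) (Xcls act (y,s)) \<and>
      (\<forall>R\<in>Xset act. Xle act R (Xcls act (x,[])) \<and> Xle act R (Xcls act (y,s)) \<longrightarrow>
          Xle act R (Xcls act (v,[])))"
    proof (intro conjI ballI impI)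
      show "Xcls act (v,[]) \<in> Xset act" unfolding Xset_def by simp
      have "v \<le> x" using mono[OF v x0] by simp
      then show "Xle act (Xcls act (v,[])) (Xcls act (x,[]))"
        unfolding Xle_iff leq_LE using simrel_refl by blast
      have "simrel act (v,[]) (inf x0 y, s)" using v
        by (intro simrel_sym[OF arrow_simrel]) (simp add: arrow_iff)
      then show "Xle act (Xcls act (v,[])) (Xcls act (y,s))"
        unfolding Xle_iff leq_LE by (meson inf.cobounded2)
    next
      fix R assume R: "R \<in> Xset act" "Xle act R (Xcls act (x,[])) \<and> Xle act R (Xcls act (y,s))"
      obtain r where r: "R = Xcls act r" using Xset_E R(1) by blast
      obtain c1 where c1: "simrel act r (c1,[])" "c1 \<le> x" using R(2) r Xle_iff leq_LE by blast
      obtain c2 where c2: "simrel act r (c2,s)" "c2 \<le> y" using R(2) r Xle_iff leq_LE by blast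
      have "simrel act (c2,s) (c1,[])" using c1 c2 simrel_sym simrel_trans by blast
      then obtain e w where "arrow act (c2,s) (e,w)" "arrow act (c1,[]) (e,w)"
        using simrel_iff by (metis prod.exhaust)
      then obtain w1 w2 where w: "s = w@w1" "act w1 c2 = Some e" "[] = w@w2" "act w2 c1 = Some e"
        using arrow_iff by (metis (no_types))
      then have "w = []" "w2 = []" by auto
      then have "e = c1" "act s c2 = Some c1" using w act_nil by auto
      then have c2': "act s c2 = Some c1" by simp
      have "c2 \<le> x0" using mono[OF c2' x0] c1 by simp
      then have "c2 \<le> inf x0 y" using c2 by simp
      then have "c1 \<le> v" using mono[OF c2' v] by simp
      then show "Xle act R (Xcls act (v,[]))" unfolding r Xle_iff leq_LE using c1 by blast
    qed
    have "Xmeet act (Xcls act (x,[])) (Xcls act (y,s)) = Xcls act (v,[])"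
      unfolding Xmeet_def
    proof (rule the_equality)
      show "Xcls act (v,[]) \<in> Xset act \<and> Xle act (Xcls act (v,[])) (Xcls act (x,[])) \<and>
       Xle act (Xcls act (v,[])) (Xcls act (y,s)) \<and>
      (\<forall>R\<in>Xset act. Xle act R (Xcls act (x,[])) \<and> Xle act R (Xcls act (y,s)) \<longrightarrow>
          Xle act R (Xcls act (v,[])))" by (rule spec)
    next
      fix M assume M: "M \<in> Xset act \<and> Xle act M (Xcls act (x,[])) \<and> Xle act M (Xcls act (y,s)) \<and>
      (\<forall>R\<in>Xset act. Xle act R (Xcls act (x,[])) \<and> Xle act R (Xcls act (y,s)) \<longrightarrow> Xle act R M)"
      then have "Xle act M (Xcls act (v,[]))" "Xle act (Xcls act (v,[])) M" using spec by blast+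
      then show "M = Xcls act (v,[])" using Xle_Xset_antisym M spec by blast
    qed
    then show "f (M_mult act p q) = W_mult act (f p) (f q)" using lhs rhs by simp
  qed
qed

end

theorem theorem5p1:
  fixes act :: "'a list \<Rightarrow> 'y::semilattice_inf \<Rightarrow> 'y option"
  assumes "left_partial_action act"
    and "axiom_A act" and "axiom_B act" and "axiom_C act"
    and "partially_defined_action act"
    and "ultra_F_restriction_monoid (M_car act) (M_mult act) (M_star act) M_plus"
  shows
    "((\<forall>P\<in>Xset act. Xle act P P) \<and>
      (\<forall>P\<in>Xset act. \<forall>Q\<in>Xset act. Xle act P Q \<and> Xle act Q P \<longrightarrow> P = Q) \<and>
      (\<forall>P\<in>Xset act. \<forall>Q\<in>Xset act. \<forall>R\<in>Xset act. Xle act P Q \<and> Xle act Q R \<longrightarrow> Xle act P R) \<and>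
      (\<forall>P\<in>Xset act. \<forall>Q\<in>Xset act. \<exists>M\<in>Xset act. Xle act M P \<and> Xle act M Q \<and>
          (\<forall>R\<in>Xset act. Xle act R P \<and> Xle act R Q \<longrightarrow> Xle act R M)))
   \<and>
     ((\<forall>t. \<forall>P\<in>Xset act. Xact act t P \<in> Xset act) \<and>
      (\<forall>P\<in>Xset act. Xact act [] P = P) \<and>
      (\<forall>s t. \<forall>P\<in>Xset act. Xact act (s @ t) P = Xact act s (Xact act t P)) \<and>
      (\<forall>t. \<forall>P\<in>Xset act. \<forall>Q\<in>Xset act. Xle act P Q \<longleftrightarrow> Xle act (Xact act t P) (Xact act t Q)) \<and>
      (\<forall>t. \<forall>Q\<in>Xset act. \<forall>P\<in>Xset act. Xle act P (Xact act t Q) \<longrightarrow>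
          (\<exists>R\<in>Xset act. P = Xact act t R)))
   \<and>
     (\<exists>f. inj_on f (M_car act) \<and> f ` M_car act \<subseteq> W_car act \<and>
        (\<forall>p\<in>M_car act. \<forall>q\<in>M_car act. f (M_mult act p q) = W_mult act (f p) (f q)) \<and>
        (\<forall>p\<in>M_car act. f (M_star act p) = W_star act (f p)) \<and>
        (\<forall>p\<in>M_car act. f (M_plus p) = W_plus (f p)))"
proof -
  interpret ctx act using assms by (unfold_locales; simp)
  show ?thesis using part1 part2 part3 by blast
qed

end
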